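(* Let $\bm{\lambda}=\{\bm{\lambda}_k\}_{k\in\mathcal{K}}$, $\beta>0$ and $\epsilon>0$ be given. Suppose the ADMM iterates $\{\bm{x}_0^t,\{\bm{x}_k^t,(\bm{x}_k^{\text{base}})^t\}_{k\in\mathcal{K}},\{\bm{z}_k^t\}_{k\in\mathcal{K}}\}_{t\in\mathbb{N}}$ satisfy: (descent in base case update) $\bm{x}_0^{t+1}$ is a stationary point of the $\bm{x}_0$-subproblem and $f_0(\bm{x}_0^{t+1})+\sum_{k\in\mathcal{K}}\big(\langle\bm{y}_k^t,\bm{x}_0^{t+1}\rangle+\tfrac{\rho}{2}\|\bm{x}_0^{t+1}-(\bm{x}_k^{\text{base}})^t+\bm{z}_k^t\|^2\big)\le f_0(\bm{x}_0^{t})+\sum_{k\in\mathcal{K}}\big(\langle\bm{y}_k^t,\bm{x}_0^{t}\rangle+\tfrac{\rho}{2}\|\bm{x}_0^{t}-(\bm{x}_k^{\text{base}})^t+\bm{z}_k^t\|^2\big)$; (descent in contingency update) there is $\gamma>0$ such that for all $k\in\mathcal{K}$, $(\bm{x}_k^{t+1},(\bm{x}_k^{\text{base}})^{t+1})$ is a stationary point of the $k$-th contingency subproblem and $f_k(\bm{x}_k^{t+1})-\langle\bm{y}_k^t,(\bm{x}_k^{\text{base}})^{t+1}\rangle+\tfrac{\rho}{2}\|\bm{x}_0^{t+1}-(\bm{x}_k^{\text{base}})^{t+1}+\bm{z}_k^t\|^2\le f_k(\bm{x}_k^{t})-\langle\bm{y}_k^t,(\bm{x}_k^{\text{base}})^{t}\rangle+\tfrac{\rho}{2}\|\bm{x}_0^{t+1}-(\bm{x}_k^{\text{base}})^{t}+\bm{z}_k^t\|^2-\gamma\beta\|(\bm{x}_k^{\text{base}})^{t+1}-(\bm{x}_k^{\text{base}})^{t}\|^2$.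 Then ADMM finds an $\epsilon$-stationary solution of the augmented Lagrangian relaxation problem (in the sense defined in the context) in at most $$T\le\left\lceil\frac{2\rho^2|\mathcal{K}|\,(\overline{L}(\bm{\lambda},\beta)-\underline{L}(\bm{\lambda},\beta))}{\min\{\gamma\beta,(\beta+\rho)/2-\beta^2/\rho\}}\cdot\frac{1}{\epsilon^2}\right\rceil$$ iterations, where $\overline{L}(\bm{\lambda},\beta):=f_0(\bm{x}_0^0)+\sum_{k\in\mathcal{K}}\big(f_k(\bm{x}_k^0)+\langle\bm{\lambda}_k,\bm{z}_k^0\rangle+\tfrac{\beta}{2}\|\bm{z}_k^0\|^2\big)+\sum_{k\in\mathcal{K}}\big(\langle\bm{y}_k^0,\bm{x}_0^0-(\bm{x}_k^{\text{base}})^0+\bm{z}_k^0\rangle+\tfrac{\rho}{2}\|\bm{x}_0^0-(\bm{x}_k^{\text{base}})^0+\bm{z}_k^0\|^2\big)$ and $\underline{L}(\bm{\lambda},\beta):=\min\{\sum_{g\in\mathcal{G}}c_g(p_{g0}):p_{g0}\in[\underline{p}_g,\overline{p}_g]\ \forall g\in\mathcal{G}\}-\|\bm{\lambda}\|^2/\beta$.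
   Context: Setting (smoothed two-stage SC-ACOPF): $\mathcal{G}$ is the set of generators, $\mathcal{K}$ the set of contingencies; $\bm{x}_0$ collects base case variables, $\bm{x}_k$ the variables of contingency $k$, and $\bm{x}_k^{\text{base}}$ is contingency $k$'s copy of $\bm{x}_0$. $X_0$ is the (closed) base case feasible set and $X_k$ the (closed, approximated) feasible set of $(\bm{x}_k,\bm{x}_k^{\text{base}})$. The costs are $f_0(\bm{x}_0)=\sum_{g\in\mathcal{G}}c_g(p_{g0})+\delta c_0^\sigma$ and $f_k(\bm{x}_k)=(1-\delta)\frac{1}{|\mathcal{K}|}c_k^\sigma$, where each $c_g$ is a convex piecewise linear increasing generation cost of base case active power $p_{g0}\in[\underline{p}_g,\overline{p}_g]$ and $c_k^\sigma\ge 0$ is a penalty cost (sum of convex piecewise linear increasing functions of nonnegative slack variables). Augmented Lagrangian relaxation (ALR) problem: minimize $f_0(\bm{x}_0)+\sum_{k\in\mathcal{K}}\big(f_k(\bm{x}_k)+\langle\bm{\lambda}_k,\bm{z}_k\rangle+\frac{\beta}{2}\|\bm{z}_k\|^2\big)$ subject to $\bm{x}_0-\bm{x}_k^{\text{base}}+\bm{z}_k=0$, $\bm{x}_0\in X_0$, $(\bm{x}_k,\bm{x}_k^{\text{base}})\in X_k$ for all $k\in\mathcal{K}$. ADMM is run with penalty $\rho=\tau\beta$, $\tau>1$, $\beta>1$, starting from $\bm{x}_0^0\in X_0$, $(\bm{x}_k^0,(\bm{x}_k^{\text{base}})^0)\in X_k$ and $(\bm{z}_k^0,\bm{y}_k^0)$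 with $\bm{\lambda}_k+\beta\bm{z}_k^0+\bm{y}_k^0=0$, and updates $\bm{x}_0^{t+1}=\operatorname{argmin}_{\bm{x}_0\in X_0} f_0(\bm{x}_0)+\sum_{k}\big(\langle\bm{y}_k^t,\bm{x}_0\rangle+\frac{\rho}{2}\|\bm{x}_0-(\bm{x}_k^{\text{base}})^t+\bm{z}_k^t\|^2\big)$; $(\bm{x}_k^{t+1},(\bm{x}_k^{\text{base}})^{t+1})=\operatorname{argmin}_{(\bm{x}_k,\bm{x}_k^{\text{base}})\in X_k} f_k(\bm{x}_k)-\langle\bm{y}_k^t,\bm{x}_k^{\text{base}}\rangle+\frac{\rho}{2}\|\bm{x}_0^{t+1}-\bm{x}_k^{\text{base}}+\bm{z}_k^t\|^2$; $\bm{z}_k^{t+1}=\frac{1}{\beta+\rho}\big(\rho((\bm{x}_k^{\text{base}})^{t+1}-\bm{x}_0^{t+1})-\bm{\lambda}_k-\bm{y}_k^t\big)$; $\bm{y}_k^{t+1}=\bm{y}_k^t+\rho(\bm{x}_0^{t+1}-(\bm{x}_k^{\text{base}})^{t+1}+\bm{z}_k^{t+1})$. $\epsilon$-stationarity for the ALR problem: $(\bm{x}_0,\{\bm{x}_k,\bm{x}_k^{\text{base}}\},\{\bm{z}_k\})$ is $\epsilon$-stationary if there exist $\{\bm{y}_k\}$, $\bm{d}_0\in\partial f_0(\bm{x}_0)+\sum_k\bm{y}_k+\mathcal{N}_{X_0}(\bm{x}_0)$, and $\bm{d}_k\in[\tilde{\nabla}f_k(\bm{x}_k);-\bm{y}_k]+\mathcal{N}_{X_k}(\bm{x}_k,\bm{x}_k^{\text{base}})$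 with $\tilde{\nabla}f_k(\bm{x}_k)\in\partial f_k(\bm{x}_k)$, such that $0=\bm{\lambda}_k+\beta\bm{z}_k+\bm{y}_k$ for all $k$, and with $\bm{s}_k:=\bm{x}_0-\bm{x}_k^{\text{base}}+\bm{z}_k$ we have $\max\{\|\bm{d}_0\|,\|\bm{d}_k\|,\|\bm{s}_k\|:k\in\mathcal{K}\}\le\epsilon$. Here $\partial$ is the general (limiting) subdifferential and $\mathcal{N}$ the general normal cone of variational analysis. *)

theory Defs
  imports "HOL-Analysis.Analysis"
begin

definition msum :: "'a::ab_group_add set \<Rightarrow> 'a set \<Rightarrow> 'a set" where
  "msum A B = {a + b | a b. a \<in> A \<and> b \<in> B}"

definition frechet_subdiff :: "('a::real_inner \<Rightarrow> real) \<Rightarrow> 'a \<Rightarrow> 'a set" where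
  "frechet_subdiff f x = {v. \<forall>e>0. \<exists>d>0. \<forall>y. norm (y - x) < d \<longrightarrow>
       f y \<ge> f x + inner v (y - x) - e * norm (y - x)}"

definition lsubdiff :: "('a::real_inner \<Rightarrow> real) \<Rightarrow> 'a \<Rightarrow> 'a set" where
  "lsubdiff f x = {v. \<exists>xs vs. xs \<longlonglongrightarrow> x \<and> (\<lambda>n. f (xs n)) \<longlonglongrightarrow> f x \<and>
       vs \<longlonglongrightarrow> v \<and> (\<forall>n. vs n \<in> frechet_subdiff f (xs n))}"

definition frechet_normal :: "'a::real_inner set \<Rightarrow> 'a \<Rightarrow> 'a set" where
  "frechet_normal C x = {v. x \<in> C \<and> (\<forall>e>0. \<exists>d>0. \<forall>y\<in>C. norm (y - x) < d \<longrightarrow>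
       inner v (y - x) \<le> e * norm (y - x))}"

definition lnormal :: "'a::real_inner set \<Rightarrow> 'a \<Rightarrow> 'a set" where
  "lnormal C x = {v. x \<in> C \<and> (\<exists>xs vs. (\<forall>n. xs n \<in> C) \<and> xs \<longlonglongrightarrow> x \<and>
       vs \<longlonglongrightarrow> v \<and> (\<forall>n. vs n \<in> frechet_normal C (xs n)))}"

definition stationary_on :: "('a::real_inner \<Rightarrow> real) \<Rightarrow> 'a set \<Rightarrow> 'a \<Rightarrow> bool" where
  "stationary_on phi X x \<longleftrightarrow> 0 \<in> msum (lsubdiff phi x) (lnormal X x)"

definition cvx_pwl_incr :: "(real \<Rightarrow> real) \<Rightarrow> bool" where
  "cvx_pwl_incr c \<longleftrightarrow> mono c \<and>
     (\<exists>A. finite A \<and> A \<noteq> {} \<and> (\<forall>x. c x = Max ((\<lambda>(a, b). a * x + b) ` A)))"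

definition eps_stationary ::
  "('a::euclidean_space \<Rightarrow> real) \<Rightarrow> ('k \<Rightarrow> 'b::euclidean_space \<Rightarrow> real) \<Rightarrow> 'a set
   \<Rightarrow> ('k \<Rightarrow> ('b \<times> 'a) set) \<Rightarrow> 'k set \<Rightarrow> ('k \<Rightarrow> 'a) \<Rightarrow> real \<Rightarrow> real
   \<Rightarrow> 'a \<Rightarrow> ('k \<Rightarrow> 'b) \<Rightarrow> ('k \<Rightarrow> 'a) \<Rightarrow> ('k \<Rightarrow> 'a) \<Rightarrow> bool" where
  "eps_stationary f0 f X0 X K lam beta eps x0 xk xb z \<longleftrightarrow>
     (\<exists>y :: 'k \<Rightarrow> 'a.
        (\<forall>k\<in>K. lam k + beta *\<^sub>R z k + y k = 0) \<and>
        (\<exists>d0 \<in> msum (msum (lsubdiff f0 x0) {\<Sum>k\<in>K. y k}) (lnormal X0 x0). norm d0 \<le> eps) \<and>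
        (\<forall>k\<in>K. \<exists>g \<in> lsubdiff (f k) (xk k).
            \<exists>dk \<in> msum {(g, - y k)} (lnormal (X k) (xk k, xb k)). norm dk \<le> eps) \<and>
        (\<forall>k\<in>K. norm (x0 - xb k + z k) \<le> eps))"

end

theory Submission
  imports Defs
begin


lemma frechet_shift:
  fixes F q :: "'a::real_inner \<Rightarrow> real"
  assumes v: "v \<in> frechet_subdiff (\<lambda>u. F u + q u) x"
    and C0: "C \<ge> 0" and H: "\<And>w. \<bar>q w - q x - inner a (w - x)\<bar> \<le> C * (norm (w - x))\<^sup>2"
  shows "v - a \<in> frechet_subdiff F x"
  unfolding frechet_subdiff_def
proof (intro CollectI allI impI)
  fix e :: real assume e: "e > 0"
  from v e obtain d where d: "d > 0" and dd: "\<And>y. norm (y - x) < d \<Longrightarrow>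
     F y + q y \<ge> F x + q x + inner v (y - x) - e/2 * norm (y - x)"
  proof -
    have "e/2 > 0" using e by simp
    from v have "\<forall>e>0. \<exists>d>0. \<forall>y. norm (y - x) < d \<longrightarrow>
       F x + q x + inner v (y - x) - e * norm (y - x) \<le> F y + q y" by (simp add: frechet_subdiff_def)
    from this[rule_format, OF \<open>e/2 > 0\<close>] obtain d where "d > 0" and
       "\<forall>y. norm (y - x) < d \<longrightarrow> F x + q x + inner v (y - x) - e/2 * norm (y - x) \<le> F y + q y" by blast
    then show ?thesis using that by auto
  qed
  define d' where "d' = min d (e / (2 * (C + 1)))"
  have d'0: "d' > 0" using d e C0 by (simp add: d'_def)
  show "\<exists>d>0. \<forall>y. norm (y - x) < d \<longrightarrow> F x + inner (v - a) (y - x) - e * norm (y - x) \<le> F y"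
  proof (intro exI[of _ d'] conjI allI impI d'0)
    fix y assume y: "norm (y - x) < d'"
    have "norm (y - x) < d" using y by (simp add: d'_def)
    from dd[OF this] have 1: "F y + q y \<ge> F x + q x + inner v (y - x) - e/2 * norm (y - x)" .
    have 2: "q y - q x - inner a (y - x) \<le> C * (norm (y - x))\<^sup>2" using H[of y] by linarith
    have Cd: "C * d' \<le> e/2"
    proof -
      have "C * d' \<le> C * (e / (2 * (C + 1)))" using C0 by (intro mult_left_mono) (auto simp: d'_def)
      also have "\<dots> \<le> e/2" using C0 e by (simp add: field_simps)
      finally show ?thesis .
    qed
    have "C * (norm (y - x))\<^sup>2 = (C * norm (y - x)) * norm (y - x)" by (simp add: power2_eq_square)
    also have "\<dots> \<le> (C * d') * norm (y - x)"
    proof (rule mult_right_mono)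
      show "C * norm (y - x) \<le> C * d'" using y C0 by (simp add: mult_left_mono)
    qed simp
    also have "\<dots> \<le> e/2 * norm (y - x)" using Cd by (rule mult_right_mono) auto
    finally have 3: "C * (norm (y - x))\<^sup>2 \<le> e/2 * norm (y - x)" .
    show "F x + inner (v - a) (y - x) - e * norm (y - x) \<le> F y"
      using 1 2 3 by (simp add: inner_diff_left)
  qed
qed

lemma lsubdiff_shift:
  fixes F q :: "'a::real_inner \<Rightarrow> real" and a :: "'a \<Rightarrow> 'a"
  assumes v: "v \<in> lsubdiff (\<lambda>u. F u + q u) x"
   and C0: "C \<ge> 0" and H: "\<And>u w. \<bar>q w - q u - inner (a u) (w - u)\<bar> \<le> C * (norm (w - u))\<^sup>2"
   and qc: "isCont q x" and ac: "isCont a x"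
  shows "v - a x \<in> lsubdiff F x"
proof -
  from v obtain xs vs where xs: "xs \<longlonglongrightarrow> x" and fx: "(\<lambda>n. F (xs n) + q (xs n)) \<longlonglongrightarrow> F x + q x"
     and vs: "vs \<longlonglongrightarrow> v" and vn: "\<forall>n. vs n \<in> frechet_subdiff (\<lambda>u. F u + q u) (xs n)"
    unfolding lsubdiff_def by blast
  have qx: "(\<lambda>n. q (xs n)) \<longlonglongrightarrow> q x" using isCont_tendsto_compose[OF qc xs] .
  have "(\<lambda>n. (F (xs n) + q (xs n)) - q (xs n)) \<longlonglongrightarrow> (F x + q x) - q x" by (intro tendsto_diff fx qx)
  hence F: "(\<lambda>n. F (xs n)) \<longlonglongrightarrow> F x" by simp
  have ax: "(\<lambda>n. a (xs n)) \<longlonglongrightarrow> a x" using isCont_tendsto_compose[OF ac xs] .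
  have V: "(\<lambda>n. vs n - a (xs n)) \<longlonglongrightarrow> v - a x" by (intro tendsto_diff vs ax)
  have N: "\<forall>n. vs n - a (xs n) \<in> frechet_subdiff F (xs n)"
  proof
    fix n show "vs n - a (xs n) \<in> frechet_subdiff F (xs n)"
      by (rule frechet_shift[OF vn[rule_format, of n] C0 H[where u="xs n"]])
  qed
  show ?thesis unfolding lsubdiff_def
    apply (rule CollectI, rule exI[of _ xs], rule exI[of _ "\<lambda>n. vs n - a (xs n)"])
    using xs F V N by simp
qed

lemma frechet_fst:
  fixes F :: "'b::real_inner \<Rightarrow> real" and vb :: "'c::real_inner"
  assumes ab: "(g, w) \<in> frechet_subdiff (\<lambda>p. F (fst p)) (v, vb)"
  shows "w = 0 \<and> g \<in> frechet_subdiff F v"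
proof -
  have D: "\<forall>e>0. \<exists>d>0. \<forall>y. norm (y - (v, vb)) < d \<longrightarrow>
       F v + inner (g, w) (y - (v, vb)) - e * norm (y - (v, vb)) \<le> F (fst y)"
    using ab by (simp add: frechet_subdiff_def)
  have w0: "w = 0"
  proof (rule ccontr)
    assume wn: "w \<noteq> 0"
    hence nw: "norm w > 0" by simp
    hence "norm w / 2 > 0" by simp
    from D[rule_format, OF this] obtain d where d: "d > 0" and dd: "\<forall>y. norm (y - (v, vb)) < d \<longrightarrow>
       F v + inner (g, w) (y - (v, vb)) - norm w / 2 * norm (y - (v, vb)) \<le> F (fst y)" by blast
    define t where "t = d / (2 * norm w)"
    have t0: "t > 0" using d nw by (simp add: t_def)
    have eq: "(v, vb + t *\<^sub>R w) - (v, vb) = (0, t *\<^sub>R w)" by simp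
    have nm: "norm ((0::'b), t *\<^sub>R w) = t * norm w" using t0 by (simp add: norm_Pair)
    have "t * norm w = d / 2" using nw by (simp add: t_def)
    hence lt: "norm ((v, vb + t *\<^sub>R w) - (v, vb)) < d" using d eq nm by simp
    have ip: "inner (g, w) ((0::'b), t *\<^sub>R w) = t * (norm w)\<^sup>2"
      by (simp add: power2_norm_eq_inner)
    from dd[rule_format, OF lt] have "F v + t * (norm w)\<^sup>2 - norm w / 2 * (t * norm w) \<le> F v"
      unfolding eq ip nm by simp
    hence "t * (norm w)\<^sup>2 \<le> 0" by (simp add: power2_eq_square algebra_simps)
    moreover have "t * (norm w)\<^sup>2 > 0" using t0 nw by simp
    ultimately show False by simp
  qed
  have "g \<in> frechet_subdiff F v"
    unfolding frechet_subdiff_def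
  proof (intro CollectI allI impI)
    fix e :: real assume e: "e > 0"
    from D[rule_format, OF e] obtain d where d: "d > 0" and dd: "\<forall>y. norm (y - (v, vb)) < d \<longrightarrow>
       F v + inner (g, w) (y - (v, vb)) - e * norm (y - (v, vb)) \<le> F (fst y)" by blast
    show "\<exists>d>0. \<forall>y. norm (y - v) < d \<longrightarrow> F v + inner g (y - v) - e * norm (y - v) \<le> F y"
    proof (intro exI[of _ d] conjI allI impI d)
      fix y assume y: "norm (y - v) < d"
      have eq: "(y, vb) - (v, vb) = (y - v, 0)" by simp
      have nm: "norm (y - v, (0::'c)) = norm (y - v)" by (simp add: norm_Pair)
      have "norm ((y, vb) - (v, vb)) < d" using y eq nm by simp
      from dd[rule_format, OF this] show "F v + inner g (y - v) - e * norm (y - v) \<le> F y"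
        unfolding eq nm by simp
    qed
  qed
  with w0 show ?thesis by simp
qed

lemma lsubdiff_fst:
  fixes F :: "'b::real_inner \<Rightarrow> real" and vb :: "'c::real_inner"
  assumes ab: "(g, w) \<in> lsubdiff (\<lambda>p. F (fst p)) (v, vb)"
  shows "w = 0 \<and> g \<in> lsubdiff F v"
proof -
  from ab obtain xs vs where xs: "xs \<longlonglongrightarrow> (v, vb)" and fx: "(\<lambda>n. F (fst (xs n))) \<longlonglongrightarrow> F v"
     and vs: "vs \<longlonglongrightarrow> (g, w)" and vn: "\<forall>n. vs n \<in> frechet_subdiff (\<lambda>p. F (fst p)) (xs n)"
    unfolding lsubdiff_def by auto
  have P: "snd (vs n) = 0 \<and> fst (vs n) \<in> frechet_subdiff F (fst (xs n))" for n
  proof -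
    have "(fst (vs n), snd (vs n)) \<in> frechet_subdiff (\<lambda>p. F (fst p)) (fst (xs n), snd (xs n))"
      using vn by simp
    from frechet_fst[OF this] show ?thesis .
  qed
  have "(\<lambda>n. snd (vs n)) \<longlonglongrightarrow> w" using tendsto_snd[OF vs] by simp
  hence "(\<lambda>n. (0::'c)) \<longlonglongrightarrow> w" using P by simp
  hence w0: "w = 0" by (simp add: LIMSEQ_const_iff)
  have x1: "(\<lambda>n. fst (xs n)) \<longlonglongrightarrow> fst (v, vb)" by (intro tendsto_fst xs)
  have v1: "(\<lambda>n. fst (vs n)) \<longlonglongrightarrow> fst (g, w)" by (intro tendsto_fst vs)
  have "g \<in> lsubdiff F v" unfolding lsubdiff_def
    apply (rule CollectI, rule exI[of _ "\<lambda>n. fst (xs n)"], rule exI[of _ "\<lambda>n. fst (vs n)"])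
    using x1 v1 fx P by simp
  with w0 show ?thesis by simp
qed

lemma stationary_mem:
  assumes "stationary_on phi X x" shows "x \<in> X"
  using assms unfolding stationary_on_def msum_def lnormal_def by auto



lemma phi_id:
  fixes l z z' y c :: "'a::real_inner" and beta rho :: real
  assumes zc: "l + beta *\<^sub>R z' + y + rho *\<^sub>R (c + z') = 0"
  shows "inner l z + beta/2 * (norm z)\<^sup>2 + inner y z + rho/2 * (norm (c + z))\<^sup>2
       = inner l z' + beta/2 * (norm z')\<^sup>2 + inner y z' + rho/2 * (norm (c + z'))\<^sup>2
         + (beta + rho)/2 * (norm (z - z'))\<^sup>2"
proof -
  have l: "l = - (beta *\<^sub>R z' + y + rho *\<^sub>R (c + z'))" using zc unfolding eq_neg_iff_add_eq_0 by (simp only: add.assoc)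
  show ?thesis unfolding l
    by (simp add: power2_norm_eq_inner inner_simps algebra_simps inner_commute field_simps)
qed

lemma quad_id:
  fixes u w c :: "'a::real_inner" and rho :: real
  shows "rho/2 * (norm (w + c))\<^sup>2 - rho/2 * (norm (u + c))\<^sup>2 - inner (rho *\<^sub>R (u + c)) (w - u)
         = rho/2 * (norm (w - u))\<^sup>2"
  by (simp add: power2_norm_eq_inner inner_simps algebra_simps inner_commute)

lemma lower_id:
  fixes l z s :: "'a::real_inner" and beta rho :: real
  assumes b: "beta > 0" and r: "rho \<ge> beta"
  shows "inner l z + beta/2 * (norm z)\<^sup>2 + (inner (- l - beta *\<^sub>R z) s + rho/2 * (norm s)\<^sup>2)
         \<ge> - (norm l)\<^sup>2 / beta"
proof -
  have e: "inner l z + beta/2 * (norm z)\<^sup>2 + (inner (- l - beta *\<^sub>R z) s + rho/2 * (norm s)\<^sup>2)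
        = (norm (beta *\<^sub>R (z - s) + l))\<^sup>2 / (2 * beta) + (rho - beta)/2 * (norm s)\<^sup>2 - (norm l)\<^sup>2 / (2*beta)"
    using b by (simp add: power2_norm_eq_inner inner_simps algebra_simps inner_commute field_simps)
  have "(norm (beta *\<^sub>R (z - s) + l))\<^sup>2 / (2 * beta) \<ge> 0" using b by simp
  moreover have "(rho - beta)/2 * (norm s)\<^sup>2 \<ge> 0" using r by simp
  moreover have "(norm l)\<^sup>2 / (2*beta) \<le> (norm l)\<^sup>2 / beta" using b by (simp add: frac_le)
  ultimately show ?thesis unfolding e by linarith
qed


lemma step_k:
  fixes a' b b' z z' y y' l :: "'a::real_inner" and F F' beta rho gamma :: real
  assumes xk: "F' - inner y b' + rho/2*(norm (a' - b' + z))\<^sup>2 \<le> F - inner y b + rho/2*(norm (a' - b + z))\<^sup>2 - gamma*beta*(norm (b' - b))\<^sup>2"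
    and zu: "z' = (1/(beta+rho)) *\<^sub>R (rho *\<^sub>R (b' - a') - l - y)"
    and yu: "y' = y + rho *\<^sub>R (a' - b' + z')"
    and yi: "l + beta *\<^sub>R z + y = 0"
    and b: "beta > 0" and r: "rho > 0"
  shows "F' + inner l z' + beta/2*(norm z')\<^sup>2 + (inner y' (a' - b' + z') + rho/2*(norm (a' - b' + z'))\<^sup>2)
     \<le> F + inner l z + beta/2*(norm z)\<^sup>2 + inner y (z - b) + (inner y a' + rho/2*(norm (a' - b + z))\<^sup>2)
        - gamma*beta*(norm (b' - b))\<^sup>2 - ((beta+rho)/2 - beta\<^sup>2/rho)*(norm (z' - z))\<^sup>2"
proof -
  have zz: "(beta + rho) *\<^sub>R z' = rho *\<^sub>R (b' - a') - l - y" using zu b r by simp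
  have zc: "l + beta *\<^sub>R z' + y + rho *\<^sub>R ((a' - b') + z') = 0"
  proof -
    have "l + beta *\<^sub>R z' + y + rho *\<^sub>R ((a' - b') + z') = (beta + rho) *\<^sub>R z' + l + y + rho *\<^sub>R (a' - b')"
      by (simp add: algebra_simps)
    also have "\<dots> = 0" unfolding zz by (simp add: algebra_simps)
    finally show ?thesis .
  qed
  have yi': "l + beta *\<^sub>R z' + y' = 0" using zc unfolding yu by (simp add: algebra_simps)
  have dy: "y' - y = - beta *\<^sub>R (z' - z)"
  proof -
    have "y' = (l + beta *\<^sub>R z' + y') - l - beta *\<^sub>R z'" by simp
    hence "y' = - l - beta *\<^sub>R z'" unfolding yi' by simp
    moreover have "y = (l + beta *\<^sub>R z + y) - l - beta *\<^sub>R z" by simp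
    hence "y = - l - beta *\<^sub>R z" unfolding yi by simp
    ultimately show ?thesis by (simp add: algebra_simps)
  qed
  have s: "a' - b' + z' = - (beta/rho) *\<^sub>R (z' - z)"
  proof -
    have "rho *\<^sub>R (a' - b' + z') = y' - y" using yu by simp
    also have "\<dots> = - beta *\<^sub>R (z' - z)" by (rule dy)
    finally have "rho *\<^sub>R (a' - b' + z') = - beta *\<^sub>R (z' - z)" .
    hence "(1/rho) *\<^sub>R (rho *\<^sub>R (a' - b' + z')) = (1/rho) *\<^sub>R (- beta *\<^sub>R (z' - z))" by simp
    thus ?thesis using r by simp
  qed
  have ip: "inner (y' - y) (a' - b' + z') = beta\<^sup>2/rho * (norm (z' - z))\<^sup>2"
    unfolding dy s using r by (simp add: power2_norm_eq_inner power2_eq_square flip: power2_norm_eq_inner)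
  have phi: "inner l z + beta/2 * (norm z)\<^sup>2 + inner y z + rho/2 * (norm ((a' - b') + z))\<^sup>2
       = inner l z' + beta/2 * (norm z')\<^sup>2 + inner y z' + rho/2 * (norm ((a' - b') + z'))\<^sup>2
         + (beta + rho)/2 * (norm (z - z'))\<^sup>2" by (rule phi_id[OF zc])
  have nc: "norm (z - z') = norm (z' - z)" by (rule norm_minus_commute)
  have e1: "inner y' (a' - b' + z') = inner y (a' - b' + z') + inner (y' - y) (a' - b' + z')"
    by (simp add: inner_diff_left)
  have e2: "inner y (a' - b' + z') = inner y a' - inner y b' + inner y z'" by (simp add: inner_simps)
  have e3: "inner y (z - b) = inner y z - inner y b" by (simp add: inner_simps)
  have e4: "(beta+rho)/2*(norm (z' - z))\<^sup>2 - beta\<^sup>2/rho*(norm (z' - z))\<^sup>2 = ((beta+rho)/2 - beta\<^sup>2/rho)*(norm (z' - z))\<^sup>2"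
    by (simp add: algebra_simps)
  show ?thesis using xk ip phi[unfolded nc] e1 e2 e3 e4 by linarith
qed



lemma yinv_step:
  fixes a' b' z' y y' l :: "'a::real_inner"
  assumes zu: "z' = (1/(beta+rho)) *\<^sub>R (rho *\<^sub>R (b' - a') - l - y)"
    and yu: "y' = y + rho *\<^sub>R (a' - b' + z')"
    and b: "beta > 0" and r: "rho > 0"
  shows "l + beta *\<^sub>R z' + y' = 0"
proof -
  have zz: "(beta + rho) *\<^sub>R z' = rho *\<^sub>R (b' - a') - l - y" using zu b r by simp
  have "l + beta *\<^sub>R z' + y' = (beta + rho) *\<^sub>R z' + l + y + rho *\<^sub>R (a' - b')"
    unfolding yu by (simp add: algebra_simps)
  also have "\<dots> = 0" unfolding zz by (simp add: algebra_simps)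
  finally show ?thesis .
qed

lemma quad_k:
  fixes Y w u B Z :: "'a::real_inner" and rho :: real
  shows "(inner Y w + rho/2 * (norm (w - B + Z))\<^sup>2) - (inner Y u + rho/2 * (norm (u - B + Z))\<^sup>2)
     - inner (Y + rho *\<^sub>R (u - B + Z)) (w - u) = rho/2 * (norm (w - u))\<^sup>2"
  by (simp add: power2_norm_eq_inner inner_simps algebra_simps inner_commute field_simps)

lemma quad_k2:
  fixes Y w u A Z :: "'a::real_inner" and rho :: real
  shows "(- inner Y w + rho/2 * (norm (A - w + Z))\<^sup>2) - (- inner Y u + rho/2 * (norm (A - u + Z))\<^sup>2)
     - inner (- Y - rho *\<^sub>R (A - u + Z)) (w - u) = rho/2 * (norm (w - u))\<^sup>2"
  by (simp add: power2_norm_eq_inner inner_simps algebra_simps inner_commute field_simps)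

lemma msum_zeroE:
  assumes "0 \<in> msum A B" obtains u n where "u \<in> A" "n \<in> B" "u + n = 0"
  using assms unfolding msum_def by force

lemma msumI: "a \<in> A \<Longrightarrow> b \<in> B \<Longrightarrow> a + b \<in> msum A B"
  unfolding msum_def by blast

lemma sumsq_bound:
  fixes A B :: "'k \<Rightarrow> real"
  assumes "finite K" "\<forall>k\<in>K. A k \<ge> 0" "\<forall>k\<in>K. B k \<ge> 0"
  shows "(\<Sum>k\<in>K. A k + B k)\<^sup>2 \<le> 2 * real (card K) * (\<Sum>k\<in>K. (A k)\<^sup>2 + (B k)\<^sup>2)"
proof -
  have "(\<Sum>k\<in>K. A k + B k)\<^sup>2 \<le> (\<Sum>k\<in>K. (A k + B k)\<^sup>2) * card K"
    by (rule sum_squared_le_sum_of_squares)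
  also have "(\<Sum>k\<in>K. (A k + B k)\<^sup>2) \<le> (\<Sum>k\<in>K. 2 * ((A k)\<^sup>2 + (B k)\<^sup>2))"
  proof (rule sum_mono)
    fix k assume "k \<in> K"
    have "0 \<le> (A k - B k)\<^sup>2" by simp
    thus "(A k + B k)\<^sup>2 \<le> 2 * ((A k)\<^sup>2 + (B k)\<^sup>2)" by (simp add: power2_eq_square algebra_simps)
  qed
  hence "(\<Sum>k\<in>K. (A k + B k)\<^sup>2) * card K \<le> (\<Sum>k\<in>K. 2 * ((A k)\<^sup>2 + (B k)\<^sup>2)) * card K"
    by (rule mult_right_mono) simp
  also have "\<dots> = 2 * real (card K) * (\<Sum>k\<in>K. (A k)\<^sup>2 + (B k)\<^sup>2)"
    by (simp add: sum_distrib_left algebra_simps)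
  finally show ?thesis .
qed


schematic_goal theorem1_aux:
  fixes G :: "'g set" and e :: "'g \<Rightarrow> 'a::euclidean_space"
    and plo phi :: "'g \<Rightarrow> real" and c :: "'g \<Rightarrow> real \<Rightarrow> real"
    and J0 :: "'j set" and s0 :: "'j \<Rightarrow> 'a" and h0 :: "'j \<Rightarrow> real \<Rightarrow> real"
    and K :: "'k set" and J :: "'k \<Rightarrow> 'j set" and s :: "'k \<Rightarrow> 'j \<Rightarrow> 'b::euclidean_space"
    and h :: "'k \<Rightarrow> 'j \<Rightarrow> real \<Rightarrow> real"
    and delta :: real
    and X0 :: "'a set" and X :: "'k \<Rightarrow> ('b \<times> 'a) set"
    and f0 :: "'a \<Rightarrow> real" and f :: "'k \<Rightarrow> 'b \<Rightarrow> real"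
    and beta tau rho gamma eps :: real
    and lam :: "'k \<Rightarrow> 'a"
    and x0 :: "nat \<Rightarrow> 'a" and xk :: "nat \<Rightarrow> 'k \<Rightarrow> 'b"
    and xb z y :: "nat \<Rightarrow> 'k \<Rightarrow> 'a"
  assumes finG: "finite G" and finK: "finite K" and finJ0: "finite J0"
    and finJ: "\<forall>k\<in>K. finite (J k)"
    \<comment> \<open>base case active powers are (distinct) coordinates of x0\<close>
    and e_basis: "\<forall>g\<in>G. e g \<in> Basis" and e_inj: "inj_on e G"
    and p_bounds: "\<forall>g\<in>G. plo g \<le> phi g"
    and c_cost: "\<forall>g\<in>G. cvx_pwl_incr (c g)"
    \<comment> \<open>penalty costs: sums of convex pwl increasing functions of nonnegative slacks\<close>
    and s0_basis: "\<forall>j\<in>J0. s0 j \<in> Basis" and h0_cost: "\<forall>j\<in>J0. cvx_pwl_incr (h0 j)"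
    and s_basis: "\<forall>k\<in>K. \<forall>j\<in>J k. s k j \<in> Basis"
    and h_cost: "\<forall>k\<in>K. \<forall>j\<in>J k. cvx_pwl_incr (h k j)"
    and delta: "0 \<le> delta" "delta \<le> 1"
    and X0_closed: "closed X0" and X_closed: "\<forall>k\<in>K. closed (X k)"
    and X0_box: "\<forall>x\<in>X0. \<forall>g\<in>G. plo g \<le> x \<bullet> e g \<and> x \<bullet> e g \<le> phi g"
    and X0_slack: "\<forall>x\<in>X0. \<forall>j\<in>J0. 0 \<le> x \<bullet> s0 j"
    and X_slack: "\<forall>k\<in>K. \<forall>(v, vb)\<in>X k. \<forall>j\<in>J k. 0 \<le> v \<bullet> s k j"
    and c0_nonneg: "\<forall>x\<in>X0. 0 \<le> (\<Sum>j\<in>J0. h0 j (x \<bullet> s0 j))"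
    and ck_nonneg: "\<forall>k\<in>K. \<forall>(v, vb)\<in>X k. 0 \<le> (\<Sum>j\<in>J k. h k j (v \<bullet> s k j))"
    and f0_def: "f0 = (\<lambda>x. (\<Sum>g\<in>G. c g (x \<bullet> e g)) + delta * (\<Sum>j\<in>J0. h0 j (x \<bullet> s0 j)))"
    and f_def: "\<forall>k\<in>K. f k = (\<lambda>v. (1 - delta) * (1 / real (card K)) * (\<Sum>j\<in>J k. h k j (v \<bullet> s k j)))"
    and beta: "beta > 1" and tau: "tau > 1" and rho: "rho = tau * beta"
    and eps: "eps > 0" and gamma: "gamma > 0"
    and init0: "x0 0 \<in> X0" and initk: "\<forall>k\<in>K. (xk 0 k, xb 0 k) \<in> X k"
    and inity: "\<forall>k\<in>K. lam k + beta *\<^sub>R z 0 k + y 0 k = 0"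
    and x0_stat: "\<forall>t. stationary_on
        (\<lambda>v. f0 v + (\<Sum>k\<in>K. inner (y t k) v + rho / 2 * (norm (v - xb t k + z t k))\<^sup>2))
        X0 (x0 (Suc t))"
    and x0_desc: "\<forall>t.
        f0 (x0 (Suc t)) + (\<Sum>k\<in>K. inner (y t k) (x0 (Suc t)) + rho / 2 * (norm (x0 (Suc t) - xb t k + z t k))\<^sup>2)
        \<le> f0 (x0 t) + (\<Sum>k\<in>K. inner (y t k) (x0 t) + rho / 2 * (norm (x0 t - xb t k + z t k))\<^sup>2)"
    and xk_stat: "\<forall>t. \<forall>k\<in>K. stationary_on
        (\<lambda>(v, vb). f k v - inner (y t k) vb + rho / 2 * (norm (x0 (Suc t) - vb + z t k))\<^sup>2)
        (X k) (xk (Suc t) k, xb (Suc t) k)"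
    and xk_desc: "\<forall>t. \<forall>k\<in>K.
        f k (xk (Suc t) k) - inner (y t k) (xb (Suc t) k) + rho / 2 * (norm (x0 (Suc t) - xb (Suc t) k + z t k))\<^sup>2
        \<le> f k (xk t k) - inner (y t k) (xb t k) + rho / 2 * (norm (x0 (Suc t) - xb t k + z t k))\<^sup>2
           - gamma * beta * (norm (xb (Suc t) k - xb t k))\<^sup>2"
    and z_upd: "\<forall>t. \<forall>k\<in>K. z (Suc t) k =
        (1 / (beta + rho)) *\<^sub>R (rho *\<^sub>R (xb (Suc t) k - x0 (Suc t)) - lam k - y t k)"
    and y_upd: "\<forall>t. \<forall>k\<in>K. y (Suc t) k = y t k + rho *\<^sub>R (x0 (Suc t) - xb (Suc t) k + z (Suc t) k)"
  shows "(?zz::nat) = 0" and "let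
      Lbar = f0 (x0 0) + (\<Sum>k\<in>K. f k (xk 0 k) + inner (lam k) (z 0 k) + beta / 2 * (norm (z 0 k))\<^sup>2)
             + (\<Sum>k\<in>K. inner (y 0 k) (x0 0 - xb 0 k + z 0 k) + rho / 2 * (norm (x0 0 - xb 0 k + z 0 k))\<^sup>2);
      Lund = (INF p \<in> {p. \<forall>g\<in>G. plo g \<le> p g \<and> p g \<le> phi g}. \<Sum>g\<in>G. c g (p g))
             - (\<Sum>k\<in>K. (norm (lam k))\<^sup>2) / beta;
      T = nat \<lceil>2 * rho\<^sup>2 * real (card K) * (Lbar - Lund)
               / min (gamma * beta) ((beta + rho) / 2 - beta\<^sup>2 / rho) * (1 / eps\<^sup>2)\<rceil>
    in \<exists>t. 1 \<le> t \<and> t \<le> max 1 T \<and>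
         eps_stationary f0 f X0 X K lam beta eps (x0 t) (xk t) (xb t) (z t)"
proof -
  have b0: "beta > 0" using beta by simp
  have rb: "rho > beta"
  proof -
    have "rho - beta = (tau - 1) * beta" by (simp add: rho algebra_simps)
    moreover have "(tau - 1) * beta > 0" using tau b0 by simp
    ultimately show ?thesis by simp
  qed
  have r0: "rho > 0" using rb b0 by simp
  have r1: "rho > 1" using rb beta by simp
  define cc where "cc = (beta + rho) / 2 - beta\<^sup>2 / rho"
  define m where "m = min (gamma * beta) cc"
  have cc0: "cc > 0"
  proof -
    have "beta * beta < beta * rho" using rb b0 by (rule mult_strict_left_mono)
    hence "beta\<^sup>2 / rho < beta" using r0 by (simp add: power2_eq_square divide_less_eq)
    moreover have "beta < (beta + rho) / 2" using rb by simp
    ultimately have "beta\<^sup>2 / rho < (beta + rho) / 2" by (rule less_trans)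
    thus ?thesis unfolding cc_def by simp
  qed
  have m0: "m > 0" using cc0 gamma b0 unfolding m_def by simp
  have mg: "m \<le> gamma * beta" and mc: "m \<le> cc" unfolding m_def by simp_all

  have yinv: "\<forall>k\<in>K. lam k + beta *\<^sub>R z t k + y t k = 0" for t
  proof (cases t)
    case 0 thus ?thesis using inity by simp
  next
    case (Suc t') show ?thesis unfolding Suc
    proof
      fix k assume k: "k \<in> K"
      show "lam k + beta *\<^sub>R z (Suc t') k + y (Suc t') k = 0"
        by (rule yinv_step[OF z_upd[rule_format, OF k] y_upd[rule_format, OF k] b0 r0])
    qed
  qed
  have yk: "y t k = - lam k - beta *\<^sub>R z t k" if k: "k \<in> K" for t k
  proof -
    have "y t k = (lam k + beta *\<^sub>R z t k + y t k) - lam k - beta *\<^sub>R z t k" by simp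
    thus ?thesis using yinv[of t] k by simp
  qed
  have memX0: "x0 t \<in> X0" for t
  proof (cases t)
    case 0 thus ?thesis using init0 by simp
  next
    case (Suc n) thus ?thesis using stationary_mem[OF x0_stat[rule_format, of n]] by simp
  qed
  have memX: "(xk t k, xb t k) \<in> X k" if k: "k \<in> K" for t k
  proof (cases t)
    case 0 thus ?thesis using initk k by simp
  next
    case (Suc n) thus ?thesis using stationary_mem[OF xk_stat[THEN spec[where x=n], THEN bspec, OF k]] by simp
  qed

  define L where "L t = f0 (x0 t) + (\<Sum>k\<in>K. f k (xk t k) + inner (lam k) (z t k) + beta / 2 * (norm (z t k))\<^sup>2
      + (inner (y t k) (x0 t - xb t k + z t k) + rho / 2 * (norm (x0 t - xb t k + z t k))\<^sup>2))" for t
  define S where "S t = (\<Sum>k\<in>K. (norm (xb (Suc t) k - xb t k))\<^sup>2 + (norm (z (Suc t) k - z t k))\<^sup>2)" for t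
  define Lbar where "Lbar = f0 (x0 0) + (\<Sum>k\<in>K. f k (xk 0 k) + inner (lam k) (z 0 k) + beta / 2 * (norm (z 0 k))\<^sup>2)
             + (\<Sum>k\<in>K. inner (y 0 k) (x0 0 - xb 0 k + z 0 k) + rho / 2 * (norm (x0 0 - xb 0 k + z 0 k))\<^sup>2)"
  define Pset where "Pset = {p. \<forall>g\<in>G. plo g \<le> p g \<and> p g \<le> phi g}"
  define Lund where "Lund = (INF p \<in> Pset. \<Sum>g\<in>G. c g (p g)) - (\<Sum>k\<in>K. (norm (lam k))\<^sup>2) / beta"
  have L0: "L 0 = Lbar" unfolding L_def Lbar_def sum.distrib by (simp only: add.assoc)

  have desc: "L (Suc t) \<le> L t - m * S t" for t
  proof -
    define P where "P k = f k (xk t k) + inner (lam k) (z t k) + beta/2*(norm (z t k))\<^sup>2 + inner (y t k) (z t k - xb t k)" for k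
    define Q where "Q k = inner (y t k) (x0 (Suc t)) + rho / 2 * (norm (x0 (Suc t) - xb t k + z t k))\<^sup>2" for k
    define R where "R k = inner (y t k) (x0 t) + rho / 2 * (norm (x0 t - xb t k + z t k))\<^sup>2" for k
    define Gk where "Gk k = gamma*beta*(norm (xb (Suc t) k - xb t k))\<^sup>2 + cc*(norm (z (Suc t) k - z t k))\<^sup>2" for k
    define Tk where "Tk k = f k (xk (Suc t) k) + inner (lam k) (z (Suc t) k) + beta / 2 * (norm (z (Suc t) k))\<^sup>2
      + (inner (y (Suc t) k) (x0 (Suc t) - xb (Suc t) k + z (Suc t) k) + rho / 2 * (norm (x0 (Suc t) - xb (Suc t) k + z (Suc t) k))\<^sup>2)" for k
    have LS: "L (Suc t) = f0 (x0 (Suc t)) + (\<Sum>k\<in>K. Tk k)" unfolding L_def Tk_def ..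
    have Lt: "L t = f0 (x0 t) + (\<Sum>k\<in>K. P k + R k)"
      unfolding L_def P_def R_def
      by (rule arg_cong[where f="\<lambda>s. f0 (x0 t) + s"], rule sum.cong[OF refl]) (simp add: inner_simps)
    have Lt': "L t = f0 (x0 t) + (\<Sum>k\<in>K. P k) + (\<Sum>k\<in>K. R k)" unfolding Lt sum.distrib by simp
    have stepk: "Tk k \<le> P k + Q k - Gk k" if k: "k \<in> K" for k
    proof -
      have "Tk k \<le> f k (xk t k) + inner (lam k) (z t k) + beta/2*(norm (z t k))\<^sup>2 + inner (y t k) (z t k - xb t k)
          + (inner (y t k) (x0 (Suc t)) + rho/2*(norm (x0 (Suc t) - xb t k + z t k))\<^sup>2)
        - gamma*beta*(norm (xb (Suc t) k - xb t k))\<^sup>2 - ((beta+rho)/2 - beta\<^sup>2/rho)*(norm (z (Suc t) k - z t k))\<^sup>2"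
        unfolding Tk_def
        by (rule step_k[OF xk_desc[rule_format, OF k] z_upd[rule_format, OF k] y_upd[rule_format, OF k]
              yinv[rule_format, OF k] b0 r0])
      thus ?thesis unfolding P_def Q_def Gk_def cc_def by simp
    qed
    have E2: "(\<Sum>k\<in>K. Tk k) \<le> (\<Sum>k\<in>K. P k) + (\<Sum>k\<in>K. Q k) - (\<Sum>k\<in>K. Gk k)"
    proof -
      have "(\<Sum>k\<in>K. Tk k) \<le> (\<Sum>k\<in>K. P k + Q k - Gk k)" by (rule sum_mono) (rule stepk)
      also have "\<dots> = (\<Sum>k\<in>K. P k) + (\<Sum>k\<in>K. Q k) - (\<Sum>k\<in>K. Gk k)" by (simp add: sum.distrib sum_subtractf)
      finally show ?thesis .
    qed
    have E3: "m * S t \<le> (\<Sum>k\<in>K. Gk k)"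
      unfolding S_def sum_distrib_left
    proof (rule sum_mono)
      fix k assume "k \<in> K"
      have 1: "m * (norm (xb (Suc t) k - xb t k))\<^sup>2 \<le> gamma*beta*(norm (xb (Suc t) k - xb t k))\<^sup>2"
        by (rule mult_right_mono[OF mg]) simp
      have 2: "m * (norm (z (Suc t) k - z t k))\<^sup>2 \<le> cc*(norm (z (Suc t) k - z t k))\<^sup>2"
        by (rule mult_right_mono[OF mc]) simp
      show "m * ((norm (xb (Suc t) k - xb t k))\<^sup>2 + (norm (z (Suc t) k - z t k))\<^sup>2) \<le> Gk k"
        unfolding Gk_def using 1 2 by (simp add: distrib_left)
    qed
    have x0d: "f0 (x0 (Suc t)) + (\<Sum>k\<in>K. Q k) \<le> f0 (x0 t) + (\<Sum>k\<in>K. R k)"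
      using x0_desc[rule_format, of t] unfolding Q_def R_def .
    show ?thesis using LS Lt' E2 E3 x0d by linarith
  qed

  have bddP: "bdd_below ((\<lambda>p. \<Sum>g\<in>G. c g (p g)) ` Pset)"
  proof (rule bdd_belowI2[where m="\<Sum>g\<in>G. c g (plo g)"])
    fix p assume "p \<in> Pset"
    hence pl: "\<forall>g\<in>G. plo g \<le> p g" unfolding Pset_def by auto
    show "(\<Sum>g\<in>G. c g (plo g)) \<le> (\<Sum>g\<in>G. c g (p g))"
    proof (rule sum_mono)
      fix g assume g: "g \<in> G"
      have "mono (c g)" using c_cost g unfolding cvx_pwl_incr_def by simp
      thus "c g (plo g) \<le> c g (p g)" using pl g unfolding mono_def by simp
    qed
  qed

  have lower: "Lund \<le> L t" for t
  proof -
    have p0: "(\<lambda>g. x0 t \<bullet> e g) \<in> Pset" using X0_box memX0[of t] unfolding Pset_def by auto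
    have I: "(INF p\<in>Pset. \<Sum>g\<in>G. c g (p g)) \<le> (\<Sum>g\<in>G. c g (x0 t \<bullet> e g))"
      using cINF_lower[OF bddP p0] by simp
    have h0: "0 \<le> delta * (\<Sum>j\<in>J0. h0 j (x0 t \<bullet> s0 j))" using delta c0_nonneg memX0[of t] by simp
    have F0: "(INF p\<in>Pset. \<Sum>g\<in>G. c g (p g)) \<le> f0 (x0 t)" using I h0 unfolding f0_def by simp
    have K: "- (norm (lam k))\<^sup>2 / beta \<le> f k (xk t k) + inner (lam k) (z t k) + beta / 2 * (norm (z t k))\<^sup>2
      + (inner (y t k) (x0 t - xb t k + z t k) + rho / 2 * (norm (x0 t - xb t k + z t k))\<^sup>2)" if k: "k \<in> K" for k
    proof -
      have fk: "0 \<le> f k (xk t k)"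
      proof -
        have A: "0 \<le> (\<Sum>j\<in>J k. h k j (xk t k \<bullet> s k j))" using ck_nonneg k memX[OF k, of t] by fastforce
        have B: "0 \<le> (1 - delta) * (1 / real (card K))" using delta by simp
        have "f k (xk t k) = (1 - delta) * (1 / real (card K)) * (\<Sum>j\<in>J k. h k j (xk t k \<bullet> s k j))"
          using f_def k by simp
        thus ?thesis using mult_nonneg_nonneg[OF B A] by simp
      qed
      have "- (norm (lam k))\<^sup>2 / beta \<le> inner (lam k) (z t k) + beta/2 * (norm (z t k))\<^sup>2
          + (inner (- lam k - beta *\<^sub>R z t k) (x0 t - xb t k + z t k) + rho/2 * (norm (x0 t - xb t k + z t k))\<^sup>2)"
        by (rule lower_id[OF b0 less_imp_le[OF rb]])
      thus ?thesis using fk unfolding yk[OF k] by simp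
    qed
    have "(\<Sum>k\<in>K. - (norm (lam k))\<^sup>2 / beta) \<le> (\<Sum>k\<in>K. f k (xk t k) + inner (lam k) (z t k) + beta / 2 * (norm (z t k))\<^sup>2
      + (inner (y t k) (x0 t - xb t k + z t k) + rho / 2 * (norm (x0 t - xb t k + z t k))\<^sup>2))"
      by (rule sum_mono) (rule K)
    moreover have "(\<Sum>k\<in>K. - (norm (lam k))\<^sup>2 / beta) = - (\<Sum>k\<in>K. (norm (lam k))\<^sup>2) / beta"
      by (simp add: sum_negf sum_divide_distrib)
    ultimately show ?thesis using F0 unfolding L_def Lund_def by linarith
  qed

  have tel: "m * (\<Sum>t<N. S t) \<le> L 0 - L N" for N
  proof (induction N)
    case 0 show ?case by simp
  next
    case (Suc N)
    have "m * (\<Sum>t<Suc N. S t) = m * (\<Sum>t<N. S t) + m * S N" by (simp add: distrib_left)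
    thus ?case using Suc desc[of N] by linarith
  qed

  have STAT: "eps_stationary f0 f X0 X K lam beta eps (x0 (Suc t)) (xk (Suc t)) (xb (Suc t)) (z (Suc t))"
    if Bd: "2 * rho\<^sup>2 * real (card K) * S t \<le> eps\<^sup>2" for t
  proof -
    define A where "A k = norm (xb (Suc t) k - xb t k)" for k
    define B where "B k = norm (z (Suc t) k - z t k)" for k
    have SAB: "S t = (\<Sum>k\<in>K. (A k)\<^sup>2 + (B k)\<^sup>2)" unfolding S_def A_def B_def ..
    have S0: "S t \<ge> 0" unfolding SAB by (intro sum_nonneg) simp
    have cS: "rho\<^sup>2 * S t \<le> eps\<^sup>2" if k: "k \<in> K" for k
    proof -
      have "card K > 0" using finK k by (auto simp: card_gt_0_iff)
      hence "1 \<le> 2 * real (card K)" by simp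
      hence "1 * (rho\<^sup>2 * S t) \<le> (2 * real (card K)) * (rho\<^sup>2 * S t)"
        using S0 by (intro mult_right_mono) simp_all
      thus ?thesis using Bd by (simp add: algebra_simps)
    qed
    have Bk: "rho * B k \<le> eps" if k: "k \<in> K" for k
    proof -
      have "(A k)\<^sup>2 + (B k)\<^sup>2 \<le> S t" unfolding SAB
        by (rule member_le_sum[OF k _ finK, where f="\<lambda>k. (A k)\<^sup>2 + (B k)\<^sup>2"]) simp
      hence "(B k)\<^sup>2 \<le> S t" using zero_le_power2[of "A k"] by linarith
      hence "rho\<^sup>2 * (B k)\<^sup>2 \<le> rho\<^sup>2 * S t" by (simp add: mult_left_mono)
      hence "(rho * B k)\<^sup>2 \<le> eps\<^sup>2" using cS[OF k] by (simp add: power_mult_distrib)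
      thus ?thesis by (rule power2_le_imp_le[OF _ less_imp_le[OF eps]])
    qed
    show ?thesis unfolding eps_stationary_def
    proof (intro exI[of _ "y (Suc t)"] conjI)
      show "\<forall>k\<in>K. lam k + beta *\<^sub>R z (Suc t) k + y (Suc t) k = 0" by (rule yinv)
    next
      from x0_stat[rule_format, of t, unfolded stationary_on_def] obtain u n where
        u: "u \<in> lsubdiff (\<lambda>v. f0 v + (\<Sum>k\<in>K. inner (y t k) v + rho / 2 * (norm (v - xb t k + z t k))\<^sup>2)) (x0 (Suc t))"
        and n: "n \<in> lnormal X0 (x0 (Suc t))" and un: "u + n = 0"
        by (rule msum_zeroE)
      define qf where "qf v = (\<Sum>k\<in>K. inner (y t k) v + rho / 2 * (norm (v - xb t k + z t k))\<^sup>2)" for v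
      define af where "af v = (\<Sum>k\<in>K. y t k + rho *\<^sub>R (v - xb t k + z t k))" for v
      have H: "\<bar>qf w - qf v - inner (af v) (w - v)\<bar> \<le> (real (card K) * (rho/2)) * (norm (w - v))\<^sup>2" for v w
      proof -
        have "qf w - qf v - inner (af v) (w - v) = (\<Sum>k\<in>K. (inner (y t k) w + rho / 2 * (norm (w - xb t k + z t k))\<^sup>2)
             - (inner (y t k) v + rho / 2 * (norm (v - xb t k + z t k))\<^sup>2)
             - inner (y t k + rho *\<^sub>R (v - xb t k + z t k)) (w - v))"
          unfolding qf_def af_def by (simp add: sum_subtractf inner_sum_left)
        also have "\<dots> = (\<Sum>k\<in>K. rho/2 * (norm (w - v))\<^sup>2)" by (rule sum.cong[OF refl]) (rule quad_k)
        also have "\<dots> = real (card K) * (rho/2) * (norm (w - v))\<^sup>2" by simp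
        finally have eq: "qf w - qf v - inner (af v) (w - v) = real (card K) * (rho/2) * (norm (w - v))\<^sup>2" .
        have nn: "0 \<le> real (card K) * (rho/2) * (norm (w - v))\<^sup>2" using r0 by simp
        show ?thesis unfolding eq using nn by simp
      qed
      have C0: "real (card K) * (rho/2) \<ge> 0" using r0 by simp
      have qc: "isCont qf (x0 (Suc t))" unfolding qf_def by (intro continuous_intros)
      have ac: "isCont af (x0 (Suc t))" unfolding af_def by (intro continuous_intros)
      have u': "u \<in> lsubdiff (\<lambda>v. f0 v + qf v) (x0 (Suc t))" using u unfolding qf_def .
      have g: "u - af (x0 (Suc t)) \<in> lsubdiff f0 (x0 (Suc t))" by (rule lsubdiff_shift[OF u' C0 H qc ac])
      define d0 where "d0 = (u - af (x0 (Suc t))) + (\<Sum>k\<in>K. y (Suc t) k) + n"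
      have mem: "d0 \<in> msum (msum (lsubdiff f0 (x0 (Suc t))) {\<Sum>k\<in>K. y (Suc t) k}) (lnormal X0 (x0 (Suc t)))"
        unfolding d0_def by (intro msumI g n) simp
      have d0eq: "d0 = (\<Sum>k\<in>K. rho *\<^sub>R ((xb t k - xb (Suc t) k) + (z (Suc t) k - z t k)))"
      proof -
        have "d0 = (u + n) + (\<Sum>k\<in>K. y (Suc t) k) - af (x0 (Suc t))" unfolding d0_def by (simp add: algebra_simps)
        also have "\<dots> = (\<Sum>k\<in>K. y (Suc t) k - (y t k + rho *\<^sub>R (x0 (Suc t) - xb t k + z t k)))"
          unfolding un af_def by (simp add: sum_subtractf)
        also have "\<dots> = (\<Sum>k\<in>K. rho *\<^sub>R ((xb t k - xb (Suc t) k) + (z (Suc t) k - z t k)))"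
          by (rule sum.cong[OF refl]) (simp add: y_upd algebra_simps scaleR_right_distrib scaleR_right_diff_distrib)
        finally show ?thesis .
      qed
      have nd: "norm d0 \<le> rho * (\<Sum>k\<in>K. A k + B k)"
      proof -
        have "norm d0 \<le> (\<Sum>k\<in>K. norm (rho *\<^sub>R ((xb t k - xb (Suc t) k) + (z (Suc t) k - z t k))))"
          unfolding d0eq by (rule norm_sum)
        also have "\<dots> \<le> (\<Sum>k\<in>K. rho * (A k + B k))"
        proof (rule sum_mono)
          fix k assume "k \<in> K"
          have "norm ((xb t k - xb (Suc t) k) + (z (Suc t) k - z t k)) \<le> norm (xb t k - xb (Suc t) k) + norm (z (Suc t) k - z t k)"
            by (rule norm_triangle_ineq)
          also have "\<dots> = A k + B k" unfolding A_def B_def by (simp add: norm_minus_commute)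
          finally show "norm (rho *\<^sub>R ((xb t k - xb (Suc t) k) + (z (Suc t) k - z t k))) \<le> rho * (A k + B k)"
            using r0 by (simp add: mult_left_mono)
        qed
        also have "\<dots> = rho * (\<Sum>k\<in>K. A k + B k)" by (simp add: sum_distrib_left)
        finally show ?thesis .
      qed
      have "(norm d0)\<^sup>2 \<le> (rho * (\<Sum>k\<in>K. A k + B k))\<^sup>2" using nd by (intro power_mono) simp_all
      also have "\<dots> = rho\<^sup>2 * (\<Sum>k\<in>K. A k + B k)\<^sup>2" by (simp add: power_mult_distrib)
      also have "\<dots> \<le> rho\<^sup>2 * (2 * real (card K) * S t)"
        unfolding SAB by (intro mult_left_mono sumsq_bound finK) (simp_all add: A_def B_def)
      also have "\<dots> \<le> eps\<^sup>2" using Bd by (simp add: algebra_simps)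
      finally have "norm d0 \<le> eps" by (rule power2_le_imp_le[OF _ less_imp_le[OF eps]])
      with mem show "\<exists>d0\<in>msum (msum (lsubdiff f0 (x0 (Suc t))) {\<Sum>k\<in>K. y (Suc t) k}) (lnormal X0 (x0 (Suc t))). norm d0 \<le> eps"
        by blast
    next
      show "\<forall>k\<in>K. \<exists>g\<in>lsubdiff (f k) (xk (Suc t) k). \<exists>dk\<in>msum {(g, - y (Suc t) k)} (lnormal (X k) (xk (Suc t) k, xb (Suc t) k)). norm dk \<le> eps"
      proof
        fix k assume k: "k \<in> K"
        define qk where "qk p = - inner (y t k) (snd p) + rho / 2 * (norm (x0 (Suc t) - snd p + z t k))\<^sup>2" for p :: "'b \<times> 'a"
        define ak where "ak p = ((0::'b), - y t k - rho *\<^sub>R (x0 (Suc t) - snd p + z t k))" for p :: "'b \<times> 'a"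
        have feq: "(\<lambda>(v, vb). f k v - inner (y t k) vb + rho / 2 * (norm (x0 (Suc t) - vb + z t k))\<^sup>2)
             = (\<lambda>p. f k (fst p) + qk p)"
          unfolding qk_def by (auto simp: fun_eq_iff)
        have st: "stationary_on (\<lambda>p. f k (fst p) + qk p) (X k) (xk (Suc t) k, xb (Suc t) k)"
          using xk_stat[THEN spec[where x=t], THEN bspec, OF k] unfolding feq .
        from st[unfolded stationary_on_def] obtain u n where
          u: "u \<in> lsubdiff (\<lambda>p. f k (fst p) + qk p) (xk (Suc t) k, xb (Suc t) k)"
          and n: "n \<in> lnormal (X k) (xk (Suc t) k, xb (Suc t) k)" and un: "u + n = 0"
          by (rule msum_zeroE)
        have H: "\<bar>qk w - qk v - inner (ak v) (w - v)\<bar> \<le> (rho/2) * (norm (w - v))\<^sup>2" for v w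
        proof -
          obtain v1 v2 where v: "v = (v1, v2)" by (cases v)
          obtain w1 w2 where w: "w = (w1, w2)" by (cases w)
          have "qk w - qk v - inner (ak v) (w - v)
              = (- inner (y t k) w2 + rho / 2 * (norm (x0 (Suc t) - w2 + z t k))\<^sup>2)
               - (- inner (y t k) v2 + rho / 2 * (norm (x0 (Suc t) - v2 + z t k))\<^sup>2)
               - inner (- y t k - rho *\<^sub>R (x0 (Suc t) - v2 + z t k)) (w2 - v2)"
            unfolding qk_def ak_def v w by simp
          also have "\<dots> = rho/2 * (norm (w2 - v2))\<^sup>2" by (rule quad_k2)
          finally have eq: "qk w - qk v - inner (ak v) (w - v) = rho/2 * (norm (w2 - v2))\<^sup>2" .
          have "norm (w2 - v2) \<le> norm (w - v)" unfolding v w using norm_snd_le[of "w2 - v2" "w1 - v1"] by simp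
          hence "(norm (w2 - v2))\<^sup>2 \<le> (norm (w - v))\<^sup>2" by (rule power_mono) simp
          hence "rho/2 * (norm (w2 - v2))\<^sup>2 \<le> rho/2 * (norm (w - v))\<^sup>2" using r0 by (simp add: mult_left_mono)
          moreover have "0 \<le> rho/2 * (norm (w2 - v2))\<^sup>2" using r0 by simp
          ultimately show ?thesis unfolding eq by simp
        qed
        have C0: "rho/2 \<ge> 0" using r0 by simp
        have qc: "isCont qk (xk (Suc t) k, xb (Suc t) k)" unfolding qk_def by (intro continuous_intros)
        have ac: "isCont ak (xk (Suc t) k, xb (Suc t) k)" unfolding ak_def by (intro continuous_intros)
        have g: "u - ak (xk (Suc t) k, xb (Suc t) k) \<in> lsubdiff (\<lambda>p. f k (fst p)) (xk (Suc t) k, xb (Suc t) k)"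
          by (rule lsubdiff_shift[OF u C0 H qc ac])
        obtain gg ww where gw: "u - ak (xk (Suc t) k, xb (Suc t) k) = (gg, ww)"
          by (cases "u - ak (xk (Suc t) k, xb (Suc t) k)")
        from lsubdiff_fst[OF g[unfolded gw]] have ww0: "ww = 0" and gg: "gg \<in> lsubdiff (f k) (xk (Suc t) k)"
          by simp_all
        define dk where "dk = (gg, - y (Suc t) k) + n"
        have mem: "dk \<in> msum {(gg, - y (Suc t) k)} (lnormal (X k) (xk (Suc t) k, xb (Suc t) k))"
          unfolding dk_def by (intro msumI n) simp
        have n_eq: "n = - u"
        proof -
          have "n = (u + n) - u" by simp
          thus ?thesis unfolding un by simp
        qed
        have u_eq: "u = ak (xk (Suc t) k, xb (Suc t) k) + (gg, 0)"
        proof -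
          have "u = (u - ak (xk (Suc t) k, xb (Suc t) k)) + ak (xk (Suc t) k, xb (Suc t) k)" by simp
          thus ?thesis unfolding gw ww0 by (simp add: add.commute)
        qed
        have dk_eq: "dk = (0, rho *\<^sub>R (z t k - z (Suc t) k))"
          unfolding dk_def n_eq u_eq ak_def
          by (simp add: y_upd[rule_format, OF k] algebra_simps scaleR_right_distrib scaleR_right_diff_distrib)
        have "norm dk = rho * B k" unfolding dk_eq B_def using r0 by (simp add: norm_Pair norm_minus_commute)
        hence "norm dk \<le> eps" using Bk[OF k] by simp
        with gg mem show "\<exists>g\<in>lsubdiff (f k) (xk (Suc t) k). \<exists>dk\<in>msum {(g, - y (Suc t) k)} (lnormal (X k) (xk (Suc t) k, xb (Suc t) k)). norm dk \<le> eps"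
          by blast
      qed
    next
      show "\<forall>k\<in>K. norm (x0 (Suc t) - xb (Suc t) k + z (Suc t) k) \<le> eps"
      proof
        fix k assume k: "k \<in> K"
        let ?s = "x0 (Suc t) - xb (Suc t) k + z (Suc t) k"
        have "rho *\<^sub>R ?s = y (Suc t) k - y t k" using y_upd[rule_format, OF k, of t] by simp
        also have "\<dots> = - beta *\<^sub>R (z (Suc t) k - z t k)"
          unfolding yk[OF k, of "Suc t"] yk[OF k, of t] by (simp add: algebra_simps)
        finally have e: "rho *\<^sub>R ?s = - beta *\<^sub>R (z (Suc t) k - z t k)" .
        have "rho * norm ?s = norm (rho *\<^sub>R ?s)" using r0 by simp
        also have "\<dots> = beta * B k" unfolding e B_def using b0 by simp
        finally have e2: "rho * norm ?s = beta * B k" .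
        have "beta * B k \<le> (rho * rho) * B k"
        proof (rule mult_right_mono)
          have "rho \<le> rho * rho" using r1 by simp
          thus "beta \<le> rho * rho" using rb by simp
        qed (simp add: B_def)
        hence "rho * norm ?s \<le> rho * (rho * B k)" using e2 by (simp add: mult.assoc)
        hence "norm ?s \<le> rho * B k" using r0 by simp
        thus "norm ?s \<le> eps" using Bk[OF k] by simp
      qed
    qed
  qed

  define Xq where "Xq = 2 * rho\<^sup>2 * real (card K) * (Lbar - Lund) / m * (1 / eps\<^sup>2)"
  define T where "T = nat \<lceil>Xq\<rceil>"
  define N where "N = max 1 T"
  have N1: "N \<ge> 1" unfolding N_def by simp
  have XN: "Xq \<le> real N" unfolding N_def T_def using real_nat_ceiling_ge[of Xq] by (simp add: of_nat_max)
  have ex: "\<exists>t0<N. m * real N * S t0 \<le> Lbar - Lund"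
  proof (rule ccontr)
    assume "\<not> ?thesis"
    hence lt: "\<forall>t0<N. Lbar - Lund < m * real N * S t0" by auto
    have "(\<Sum>t0<N. Lbar - Lund) < (\<Sum>t0<N. m * real N * S t0)"
      by (rule sum_strict_mono) (use N1 lt in \<open>auto simp: lessThan_empty_iff\<close>)
    hence "real N * (Lbar - Lund) < real N * (m * (\<Sum>t0<N. S t0))"
      by (simp add: sum_distrib_left mult.assoc mult.left_commute)
    hence "Lbar - Lund < m * (\<Sum>t0<N. S t0)" using N1 by simp
    moreover have "m * (\<Sum>t0<N. S t0) \<le> Lbar - Lund" using tel[of N] lower[of N] L0 by linarith
    ultimately show False by linarith
  qed
  then obtain t0 where t0: "t0 < N" and St0: "m * real N * S t0 \<le> Lbar - Lund" by blast
  have bound: "2 * rho\<^sup>2 * real (card K) * S t0 \<le> eps\<^sup>2"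
  proof -
    define cK where "cK = 2 * rho\<^sup>2 * real (card K)"
    have c0: "cK \<ge> 0" unfolding cK_def by simp
    have "cK * (m * real N * S t0) \<le> cK * (Lbar - Lund)" by (rule mult_left_mono[OF St0 c0])
    also have "cK * (Lbar - Lund) = Xq * m * eps\<^sup>2" unfolding Xq_def cK_def using m0 eps by (simp add: field_simps)
    also have "Xq * m * eps\<^sup>2 \<le> real N * m * eps\<^sup>2"
    proof -
      have "Xq * m \<le> real N * m" using XN m0 by simp
      thus ?thesis by (rule mult_right_mono) simp
    qed
    finally have "(cK * S t0) * (m * real N) \<le> eps\<^sup>2 * (m * real N)" by (simp add: algebra_simps)
    moreover have "m * real N > 0" using m0 N1 by simp
    ultimately show ?thesis unfolding cK_def by (rule mult_right_le_imp_le)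
  qed
  have stat: "eps_stationary f0 f X0 X K lam beta eps (x0 (Suc t0)) (xk (Suc t0)) (xb (Suc t0)) (z (Suc t0))"
    using bound by (rule STAT)
  have "\<exists>t. 1 \<le> t \<and> t \<le> max 1 T \<and> eps_stationary f0 f X0 X K lam beta eps (x0 t) (xk t) (xb t) (z t)"
    using t0 stat unfolding N_def by (intro exI[of _ "Suc t0"]) auto
  thus "let
      Lbar = f0 (x0 0) + (\<Sum>k\<in>K. f k (xk 0 k) + inner (lam k) (z 0 k) + beta / 2 * (norm (z 0 k))\<^sup>2)
             + (\<Sum>k\<in>K. inner (y 0 k) (x0 0 - xb 0 k + z 0 k) + rho / 2 * (norm (x0 0 - xb 0 k + z 0 k))\<^sup>2);
      Lund = (INF p \<in> {p. \<forall>g\<in>G. plo g \<le> p g \<and> p g \<le> phi g}. \<Sum>g\<in>G. c g (p g))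
             - (\<Sum>k\<in>K. (norm (lam k))\<^sup>2) / beta;
      T = nat \<lceil>2 * rho\<^sup>2 * real (card K) * (Lbar - Lund)
               / min (gamma * beta) ((beta + rho) / 2 - beta\<^sup>2 / rho) * (1 / eps\<^sup>2)\<rceil>
    in \<exists>t. 1 \<le> t \<and> t \<le> max 1 T \<and>
         eps_stationary f0 f X0 X K lam beta eps (x0 t) (xk t) (xb t) (z t)" unfolding Let_def T_def Xq_def m_def cc_def Lbar_def Lund_def Pset_def .
  show "(0::nat) = 0" by (rule refl)
qed

theorem theorem1:
  fixes G :: "'g set" and e :: "'g \<Rightarrow> 'a::euclidean_space"
    and plo phi :: "'g \<Rightarrow> real" and c :: "'g \<Rightarrow> real \<Rightarrow> real"
    and J0 :: "'j set" and s0 :: "'j \<Rightarrow> 'a" and h0 :: "'j \<Rightarrow> real \<Rightarrow> real"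
    and K :: "'k set" and J :: "'k \<Rightarrow> 'j set" and s :: "'k \<Rightarrow> 'j \<Rightarrow> 'b::euclidean_space"
    and h :: "'k \<Rightarrow> 'j \<Rightarrow> real \<Rightarrow> real"
    and delta :: real
    and X0 :: "'a set" and X :: "'k \<Rightarrow> ('b \<times> 'a) set"
    and f0 :: "'a \<Rightarrow> real" and f :: "'k \<Rightarrow> 'b \<Rightarrow> real"
    and beta tau rho gamma eps :: real
    and lam :: "'k \<Rightarrow> 'a"
    and x0 :: "nat \<Rightarrow> 'a" and xk :: "nat \<Rightarrow> 'k \<Rightarrow> 'b"
    and xb z y :: "nat \<Rightarrow> 'k \<Rightarrow> 'a"
  assumes finG: "finite G" and finK: "finite K" and finJ0: "finite J0"
    and finJ: "\<forall>k\<in>K. finite (J k)"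
    \<comment> \<open>base case active powers are (distinct) coordinates of x0\<close>
    and e_basis: "\<forall>g\<in>G. e g \<in> Basis" and e_inj: "inj_on e G"
    and p_bounds: "\<forall>g\<in>G. plo g \<le> phi g"
    and c_cost: "\<forall>g\<in>G. cvx_pwl_incr (c g)"
    \<comment> \<open>penalty costs: sums of convex pwl increasing functions of nonnegative slacks\<close>
    and s0_basis: "\<forall>j\<in>J0. s0 j \<in> Basis" and h0_cost: "\<forall>j\<in>J0. cvx_pwl_incr (h0 j)"
    and s_basis: "\<forall>k\<in>K. \<forall>j\<in>J k. s k j \<in> Basis"
    and h_cost: "\<forall>k\<in>K. \<forall>j\<in>J k. cvx_pwl_incr (h k j)"
    and delta: "0 \<le> delta" "delta \<le> 1"
    \<comment> \<open>feasible sets\<close>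
    and X0_closed: "closed X0" and X_closed: "\<forall>k\<in>K. closed (X k)"
    and X0_box: "\<forall>x\<in>X0. \<forall>g\<in>G. plo g \<le> x \<bullet> e g \<and> x \<bullet> e g \<le> phi g"
    and X0_slack: "\<forall>x\<in>X0. \<forall>j\<in>J0. 0 \<le> x \<bullet> s0 j"
    and X_slack: "\<forall>k\<in>K. \<forall>(v, vb)\<in>X k. \<forall>j\<in>J k. 0 \<le> v \<bullet> s k j"
    and c0_nonneg: "\<forall>x\<in>X0. 0 \<le> (\<Sum>j\<in>J0. h0 j (x \<bullet> s0 j))"
    and ck_nonneg: "\<forall>k\<in>K. \<forall>(v, vb)\<in>X k. 0 \<le> (\<Sum>j\<in>J k. h k j (v \<bullet> s k j))"
    \<comment> \<open>costs\<close>
    and f0_def: "f0 = (\<lambda>x. (\<Sum>g\<in>G. c g (x \<bullet> e g)) + delta * (\<Sum>j\<in>J0. h0 j (x \<bullet> s0 j)))"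
    and f_def: "\<forall>k\<in>K. f k = (\<lambda>v. (1 - delta) * (1 / real (card K)) * (\<Sum>j\<in>J k. h k j (v \<bullet> s k j)))"
    \<comment> \<open>parameters\<close>
    and beta: "beta > 1" and tau: "tau > 1" and rho: "rho = tau * beta"
    and eps: "eps > 0" and gamma: "gamma > 0"
    \<comment> \<open>initialization\<close>
    and init0: "x0 0 \<in> X0" and initk: "\<forall>k\<in>K. (xk 0 k, xb 0 k) \<in> X k"
    and inity: "\<forall>k\<in>K. lam k + beta *\<^sub>R z 0 k + y 0 k = 0"
    \<comment> \<open>base case update: stationary point with descent\<close>
    and x0_stat: "\<forall>t. stationary_on
        (\<lambda>v. f0 v + (\<Sum>k\<in>K. inner (y t k) v + rho / 2 * (norm (v - xb t k + z t k))\<^sup>2))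
        X0 (x0 (Suc t))"
    and x0_desc: "\<forall>t.
        f0 (x0 (Suc t)) + (\<Sum>k\<in>K. inner (y t k) (x0 (Suc t)) + rho / 2 * (norm (x0 (Suc t) - xb t k + z t k))\<^sup>2)
        \<le> f0 (x0 t) + (\<Sum>k\<in>K. inner (y t k) (x0 t) + rho / 2 * (norm (x0 t - xb t k + z t k))\<^sup>2)"
    \<comment> \<open>contingency updates: stationary points with sufficient descent\<close>
    and xk_stat: "\<forall>t. \<forall>k\<in>K. stationary_on
        (\<lambda>(v, vb). f k v - inner (y t k) vb + rho / 2 * (norm (x0 (Suc t) - vb + z t k))\<^sup>2)
        (X k) (xk (Suc t) k, xb (Suc t) k)"
    and xk_desc: "\<forall>t. \<forall>k\<in>K.
        f k (xk (Suc t) k) - inner (y t k) (xb (Suc t) k) + rho / 2 * (norm (x0 (Suc t) - xb (Suc t) k + z t k))\<^sup>2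
        \<le> f k (xk t k) - inner (y t k) (xb t k) + rho / 2 * (norm (x0 (Suc t) - xb t k + z t k))\<^sup>2
           - gamma * beta * (norm (xb (Suc t) k - xb t k))\<^sup>2"
    \<comment> \<open>slack and multiplier updates\<close>
    and z_upd: "\<forall>t. \<forall>k\<in>K. z (Suc t) k =
        (1 / (beta + rho)) *\<^sub>R (rho *\<^sub>R (xb (Suc t) k - x0 (Suc t)) - lam k - y t k)"
    and y_upd: "\<forall>t. \<forall>k\<in>K. y (Suc t) k = y t k + rho *\<^sub>R (x0 (Suc t) - xb (Suc t) k + z (Suc t) k)"
  shows "let
      Lbar = f0 (x0 0) + (\<Sum>k\<in>K. f k (xk 0 k) + inner (lam k) (z 0 k) + beta / 2 * (norm (z 0 k))\<^sup>2)
             + (\<Sum>k\<in>K. inner (y 0 k) (x0 0 - xb 0 k + z 0 k) + rho / 2 * (norm (x0 0 - xb 0 k + z 0 k))\<^sup>2);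
      Lund = (INF p \<in> {p. \<forall>g\<in>G. plo g \<le> p g \<and> p g \<le> phi g}. \<Sum>g\<in>G. c g (p g))
             - (\<Sum>k\<in>K. (norm (lam k))\<^sup>2) / beta;
      T = nat \<lceil>2 * rho\<^sup>2 * real (card K) * (Lbar - Lund)
               / min (gamma * beta) ((beta + rho) / 2 - beta\<^sup>2 / rho) * (1 / eps\<^sup>2)\<rceil>
    in \<exists>t. 1 \<le> t \<and> t \<le> max 1 T \<and>
         eps_stationary f0 f X0 X K lam beta eps (x0 t) (xk t) (xb t) (z t)"
  using assms by (rule theorem1_aux(2))

end
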